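(* Let $(M,\rho)$ be a metric space and $f:[a,b]\to M$ continuous. Assume that (i) there is a closed, at most countable set $E\subset[a,b]$ such that $f$ is absolutely continuous on each closed interval contained in $[a,b]\setminus E$, and (ii) $md(f,x)$ exists for almost every $x\in[a,b]$ and $\int_a^b md(f,x)\,dx<\infty$. Then $f$ is absolutely continuous on $[a,b]$.
   Context: $md(f,x)=\lim_{t\to0,\ x+t\in[a,b]}\rho(f(x+t),f(x))/|t|$ when it exists. Absolute continuity of $f$ on an interval $I$: for every $\varepsilon>0$ there is $\delta>0$ such that for non-overlapping intervals $[a_i,b_i]\subset I$ with $\sum_i(b_i-a_i)<\delta$ one has $\sum_i\rho(f(b_i),f(a_i))<\varepsilon$. *)

theory Defs
  imports "HOL-Analysis.Analysis"
begin

definition md_exists :: "(real \<Rightarrow> 'a::metric_space) \<Rightarrow> real \<Rightarrow> real \<Rightarrow> real \<Rightarrow> bool" where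
  "md_exists f a b x \<longleftrightarrow>
     (\<exists>L. ((\<lambda>t. dist (f (x + t)) (f x) / \<bar>t\<bar>) \<longlongrightarrow> L) (at 0 within {t. x + t \<in> {a..b}}))"

definition md :: "(real \<Rightarrow> 'a::metric_space) \<Rightarrow> real \<Rightarrow> real \<Rightarrow> real \<Rightarrow> real" where
  "md f a b x = (if md_exists f a b x
      then Lim (at 0 within {t. x + t \<in> {a..b}}) (\<lambda>t. dist (f (x + t)) (f x) / \<bar>t\<bar>)
      else 0)"

text \<open>Absolute continuity on the closed interval [c,d]; a finite family of
  non-overlapping intervals [u,v] is a finite set of pairs (u,v).\<close>
definition abs_cont_on :: "(real \<Rightarrow> 'a::metric_space) \<Rightarrow> real \<Rightarrow> real \<Rightarrow> bool" where
  "abs_cont_on f c d \<longleftrightarrow>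
     (\<forall>\<epsilon>>0. \<exists>\<delta>>0. \<forall>S :: (real \<times> real) set.
        finite S \<and> (\<forall>(u, v) \<in> S. c \<le> u \<and> u \<le> v \<and> v \<le> d) \<and>
        (\<forall>(u, v) \<in> S. \<forall>(u', v') \<in> S. (u, v) \<noteq> (u', v') \<longrightarrow> v \<le> u' \<or> v' \<le> u) \<and>
        (\<Sum>(u, v) \<in> S. v - u) < \<delta>
        \<longrightarrow> (\<Sum>(u, v) \<in> S. dist (f v) (f u)) < \<epsilon>)"

end

theory Submission
  imports Defs
begin

lemma nontriv_md:
  fixes a b x :: real
  assumes "a < b" "x \<in> {a..b}"
  shows "at 0 within {t. x + t \<in> {a..b}} \<noteq> bot"
proof -
  have "0 islimpt {t. x + t \<in> {a..b}}"
    unfolding islimpt_approachable_real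
  proof (intro allI impI)
    fix e :: real assume e: "e > 0"
    show "\<exists>x'\<in>{t. x + t \<in> {a..b}}. x' \<noteq> 0 \<and> \<bar>x' - 0\<bar> < e"
    proof (cases "x < b")
      case True
      show ?thesis
        by (rule bexI[of _ "min (e/2) (b - x)"]) (use True e assms in auto)
    next
      case False
      then have "x = b" using assms by auto
      show ?thesis
        by (rule bexI[of _ "- min (e/2) (b - a)"]) (use \<open>x = b\<close> e assms in auto)
    qed
  qed
  then show ?thesis
    by (simp add: trivial_limit_within)
qed

lemma md_tendsto:
  fixes f :: "real \<Rightarrow> 'a::metric_space"
  assumes "a < b" "x \<in> {a..b}" "md_exists f a b x"
  shows "((\<lambda>t. dist (f (x + t)) (f x) / \<bar>t\<bar>) \<longlongrightarrow> md f a b x) (at 0 within {t. x + t \<in> {a..b}})"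
proof -
  obtain L where L: "((\<lambda>t. dist (f (x + t)) (f x) / \<bar>t\<bar>) \<longlongrightarrow> L) (at 0 within {t. x + t \<in> {a..b}})"
    using assms(3) unfolding md_exists_def by blast
  have "md f a b x = L"
    unfolding md_def using assms(3) tendsto_Lim[OF nontriv_md[OF assms(1,2)] L] by simp
  with L show ?thesis by simp
qed

lemma md_nonneg:
  fixes f :: "real \<Rightarrow> 'a::metric_space"
  assumes "a < b" "x \<in> {a..b}"
  shows "md f a b x \<ge> 0"
proof (cases "md_exists f a b x")
  case True
  show ?thesis
    by (rule tendsto_lowerbound[OF md_tendsto[OF assms True] _ nontriv_md[OF assms]]) (auto intro!: always_eventually)
next
  case False
  then show ?thesis by (simp add: md_def)
qed

lemma md_bound:
  fixes f :: "real \<Rightarrow> 'a::metric_space"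
  assumes "a < b" "x \<in> {a..b}" "md_exists f a b x" "e > 0"
  shows "\<exists>d>0. \<forall>y\<in>{a..b}. \<bar>y - x\<bar> < d \<longrightarrow> dist (f y) (f x) \<le> (md f a b x + e) * \<bar>y - x\<bar>"
proof -
  have "\<forall>\<^sub>F t in at 0 within {t. x + t \<in> {a..b}}. dist (dist (f (x + t)) (f x) / \<bar>t\<bar>) (md f a b x) < e"
    using md_tendsto[OF assms(1-3), unfolded tendsto_iff] assms(4) by blast
  then obtain d where d: "d > 0" and
    dd: "\<And>t. t \<in> {t. x + t \<in> {a..b}} \<Longrightarrow> t \<noteq> 0 \<Longrightarrow> dist t 0 < d \<Longrightarrow>
       dist (dist (f (x + t)) (f x) / \<bar>t\<bar>) (md f a b x) < e"
    unfolding eventually_at by blast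
  show ?thesis
  proof (intro exI[of _ d] conjI ballI impI d)
    fix y assume y: "y \<in> {a..b}" "\<bar>y - x\<bar> < d"
    show "dist (f y) (f x) \<le> (md f a b x + e) * \<bar>y - x\<bar>"
    proof (cases "y = x")
      case True then show ?thesis by simp
    next
      case False
      have "dist (dist (f (x + (y - x))) (f x) / \<bar>y - x\<bar>) (md f a b x) < e"
        using dd[of "y - x"] y False by (auto simp: dist_real_def)
      then have "dist (f y) (f x) / \<bar>y - x\<bar> \<le> md f a b x + e"
        by (auto simp: dist_real_def)
      then show ?thesis using False by (simp add: divide_le_eq mult.commute)
    qed
  qed
qed

lemma tdiv_elem:
  fixes D :: "(real \<times> real set) set"
  assumes "D tagged_division_of {p..q}" "(x, K) \<in> D"
  obtains u v where "K = {u..v}" "u \<le> x" "x \<le> v" "Inf K = u" "Sup K = v" "measure lborel K = v - u"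
    "p \<le> u" "v \<le> q"
proof -
  note td = tagged_division_ofD[OF assms(1)]
  obtain u v where K: "K = cbox u v" using td(4)[OF assms(2)] by blast
  have "x \<in> K" using td(2)[OF assms(2)] .
  then have uv: "u \<le> x" "x \<le> v" using K by auto
  have "K \<subseteq> {p..q}" using td(3)[OF assms(2)] .
  then have "p \<le> u" "v \<le> q" using K uv by auto
  then show ?thesis using that[of u v] K uv by auto
qed

lemma tag_count:
  fixes D :: "(real \<times> real set) set"
  assumes td: "D tagged_division_of {p..q}"
  shows "card {(y,K)\<in>D. y = x \<and> measure lborel K \<noteq> 0} \<le> 2"
proof -
  note tdD = tagged_division_ofD[OF td]
  define QL where "QL = {(y,K)\<in>D. y = x \<and> Inf K < x}"
  define QR where "QR = {(y,K)\<in>D. y = x \<and> x < Sup K}"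
  have fin: "finite QL" "finite QR" unfolding QL_def QR_def
    by (rule finite_subset[OF _ tdD(1)], auto)+
  have sub: "{(y,K)\<in>D. y = x \<and> measure lborel K \<noteq> 0} \<subseteq> QL \<union> QR"
  proof (clarsimp)
    fix K assume xK: "(x, K) \<in> D" "measure lborel K \<noteq> 0" "(x, K) \<notin> QR"
    obtain u v where "K = {u..v}" "u \<le> x" "x \<le> v" "Inf K = u" "Sup K = v" "measure lborel K = v - u"
      by (rule tdiv_elem[OF td xK(1)])
    then show "(x, K) \<in> QL" using xK unfolding QL_def QR_def by auto
  qed
  have cL: "card QL \<le> 1"
  proof -
    have "\<forall>a1\<in>QL. \<forall>a2\<in>QL. a1 = a2"
    proof (clarsimp simp: QL_def)
      fix K K' assume h: "(x, K) \<in> D" "Inf K < x" "(x, K') \<in> D" "Inf K' < x"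
      obtain u v where uv: "K = {u..v}" "u \<le> x" "x \<le> v" "Inf K = u"
        by (rule tdiv_elem[OF td h(1)])
      obtain u' v' where uv': "K' = {u'..v'}" "u' \<le> x" "x \<le> v'" "Inf K' = u'"
        by (rule tdiv_elem[OF td h(3)])
      show "K = K'"
      proof (rule ccontr)
        assume "K \<noteq> K'"
        then have "interior K \<inter> interior K' = {}" using tdD(5)[OF h(1) h(3)] by auto
        moreover have "(max u u' + x) / 2 \<in> interior K \<inter> interior K'"
          using uv uv' h by auto
        ultimately show False by blast
      qed
    qed
    then show ?thesis using card_le_Suc0_iff_eq[OF fin(1)] by simp
  qed
  have cR: "card QR \<le> 1"
  proof -
    have "\<forall>a1\<in>QR. \<forall>a2\<in>QR. a1 = a2"
    proof (clarsimp simp: QR_def)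
      fix K K' assume h: "(x, K) \<in> D" "x < Sup K" "(x, K') \<in> D" "x < Sup K'"
      obtain u v where uv: "K = {u..v}" "u \<le> x" "x \<le> v" "Sup K = v"
        by (rule tdiv_elem[OF td h(1)])
      obtain u' v' where uv': "K' = {u'..v'}" "u' \<le> x" "x \<le> v'" "Sup K' = v'"
        by (rule tdiv_elem[OF td h(3)])
      show "K = K'"
      proof (rule ccontr)
        assume "K \<noteq> K'"
        then have "interior K \<inter> interior K' = {}" using tdD(5)[OF h(1) h(3)] by auto
        moreover have "(min v v' + x) / 2 \<in> interior K \<inter> interior K'"
          using uv uv' h by auto
        ultimately show False by blast
      qed
    qed
    then show ?thesis using card_le_Suc0_iff_eq[OF fin(2)] by simp
  qed
  have "card {(y,K)\<in>D. y = x \<and> measure lborel K \<noteq> 0} \<le> card (QL \<union> QR)"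
    by (rule card_mono[OF _ sub]) (use fin in auto)
  also have "\<dots> \<le> card QL + card QR" by (rule card_Un_le)
  finally show ?thesis using cL cR by linarith
qed

lemma geom_sum_le:
  assumes "finite A" "inj_on n A"
  shows "(\<Sum>x\<in>A. (1/2::real) ^ (n x)) \<le> 2"
proof -
  have "(\<Sum>x\<in>A. (1/2::real) ^ (n x)) = (\<Sum>k\<in>n ` A. (1/2::real) ^ k)"
    using sum.reindex[OF assms(2), of "\<lambda>k. (1/2::real)^k"] by simp
  also have "\<dots> \<le> (\<Sum>k. (1/2::real) ^ k)"
    by (rule sum_le_suminf) (use assms(1) in \<open>auto intro: summable_geometric\<close>)
  also have "\<dots> = 2" using suminf_geometric[of "1/2::real"] by simp
  finally show ?thesis .
qed

lemma md_integrable: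
  fixes f :: "real \<Rightarrow> 'a::metric_space"
  assumes ab: "a < b" and cont: "continuous_on {a..b} f"
    and ae: "AE x in lebesgue. x \<in> {a..b} \<longrightarrow> md_exists f a b x"
    and fin: "(\<integral>\<^sup>+ x \<in> {a..b}. ennreal (md f a b x) \<partial>lebesgue) < \<infinity>"
  shows "set_integrable lebesgue {a..b} (md f a b)"
proof -
  define g where "g x = f (max a (min b x))" for x
  have gc: "continuous_on UNIV g"
    unfolding g_def
    by (rule continuous_on_compose2[OF cont]) (use ab in \<open>auto intro!: continuous_intros\<close>)
  define h where "h n x = real (Suc n) * dist (g (x + inverse (real (Suc n)))) (g x)" for n x
  have hc: "continuous_on UNIV (h n)" for n
    unfolding h_def
    by (intro continuous_intros continuous_on_compose2[OF gc]) auto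
  define F where "F x = indicator {a..<b} x * lim (\<lambda>n. h n x)" for x
  have "F \<in> borel_measurable borel"
    unfolding F_def using hc by (intro borel_measurable_times borel_measurable_indicator
        borel_measurable_lim_metric borel_measurable_continuous_onI) auto
  then have Fm: "F \<in> borel_measurable lebesgue"
    by (simp add: measurable_completion)
  have nb: "AE x in lebesgue. x \<notin> {b}"
    by (rule AE_not_in) (auto intro: null_sets_completion countable_imp_null_set_lborel)
  have "AE x in lebesgue. F x = indicator {a..b} x * md f a b x"
    using ae nb
  proof eventually_elim
    case (elim x)
    show ?case
    proof (cases "x \<in> {a..<b}")
      case False
      with elim show ?thesis by (auto simp: F_def indicator_def)
    next
      case True
      then have x: "x \<in> {a..b}" "x < b" by auto
      have me: "md_exists f a b x" using elim x by auto
      define t where "t n = inverse (real (Suc n))" for n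
      have t0: "t \<longlonglongrightarrow> 0" unfolding t_def by (rule LIMSEQ_inverse_real_of_nat)
      have tpos: "t n > 0" for n unfolding t_def by simp
      have evt: "\<forall>\<^sub>F n in sequentially. t n < b - x"
        using order_tendstoD(2)[OF t0, of "b - x"] x by simp
      have "filterlim t (at 0 within {s. x + s \<in> {a..b}}) sequentially"
        unfolding filterlim_at
      proof
        show "\<forall>\<^sub>F n in sequentially. t n \<in> {s. x + s \<in> {a..b}} \<and> t n \<noteq> 0"
          using evt
        proof eventually_elim
          case (elim n) then show ?case using x tpos[of n] by auto
        qed
      qed (rule t0)
      from filterlim_compose[OF md_tendsto[OF ab x(1) me] this]
      have L: "(\<lambda>n. dist (f (x + t n)) (f x) / \<bar>t n\<bar>) \<longlonglongrightarrow> md f a b x" by simp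
      have "\<forall>\<^sub>F n in sequentially. dist (f (x + t n)) (f x) / \<bar>t n\<bar> = h n x"
        using evt
      proof eventually_elim
        case (elim n)
        have "g (x + t n) = f (x + t n)" "g x = f x" unfolding g_def using elim x tpos[of n]
          by (auto simp: max_def min_def)
        then show ?case unfolding h_def using tpos[of n] by (simp add: t_def field_simps)
      qed
      from tendsto_cong[THEN iffD1, OF this L]
      have "(\<lambda>n. h n x) \<longlonglongrightarrow> md f a b x" .
      then have "lim (\<lambda>n. h n x) = md f a b x" by (rule limI)
      then show ?thesis using True by (simp add: F_def)
    qed
  qed
  from borel_measurable_AE[OF Fm this]
  have mm: "(\<lambda>x. indicator {a..b} x * md f a b x) \<in> borel_measurable lebesgue" .
  have nn: "AE x in lebesgue. 0 \<le> indicator {a..b} x * md f a b x"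
    using md_nonneg[OF ab] by (intro AE_I2) (auto simp: indicator_def)
  have "(\<integral>\<^sup>+ x. ennreal (indicator {a..b} x * md f a b x) \<partial>lebesgue)
      = (\<integral>\<^sup>+ x \<in> {a..b}. ennreal (md f a b x) \<partial>lebesgue)"
    by (intro nn_integral_cong) (auto simp: indicator_def)
  with fin have "(\<integral>\<^sup>+ x. ennreal (indicator {a..b} x * md f a b x) \<partial>lebesgue) < \<infinity>" by simp
  from integrableI_nonneg[OF mm nn this]
  show ?thesis unfolding set_integrable_def by simp
qed

lemma tag_group_bound:
  fixes D :: "(real \<times> real set) set" and c :: "real \<Rightarrow> real set \<Rightarrow> real"
  assumes td: "D tagged_division_of {p..q}"
    and c0: "\<And>x K. (x, K) \<in> D \<Longrightarrow> measure lborel K = 0 \<Longrightarrow> c x K = 0"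
    and cnn: "\<And>x K. (x, K) \<in> D \<Longrightarrow> 0 \<le> c x K"
    and cb: "\<And>x K. (x, K) \<in> D \<Longrightarrow> P x \<Longrightarrow> c x K \<le> \<beta> * (1/2) ^ (n x)"
    and inj: "inj_on n {x. P x}" and beta: "\<beta> \<ge> 0"
  shows "(\<Sum>(x, K)\<in>{(x, K)\<in>D. P x}. c x K) \<le> 4 * \<beta>"
proof -
  note tdD = tagged_division_ofD[OF td]
  define DE where "DE = {(x, K)\<in>D. P x}"
  have finDE: "finite DE" unfolding DE_def by (rule finite_subset[OF _ tdD(1)]) auto
  have "(\<Sum>(x, K)\<in>DE. c x K) = (\<Sum>x\<in>fst ` DE. \<Sum>z\<in>{z\<in>DE. fst z = x}. case z of (x, K) \<Rightarrow> c x K)"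
    by (rule sum.image_gen[OF finDE])
  also have "\<dots> \<le> (\<Sum>x\<in>fst ` DE. 2 * \<beta> * (1/2) ^ (n x))"
  proof (rule sum_mono)
    fix x assume x: "x \<in> fst ` DE"
    then have Px: "P x" unfolding DE_def by auto
    define Q where "Q = {(y, K)\<in>D. y = x \<and> measure lborel K \<noteq> 0}"
    have finQ: "finite Q" unfolding Q_def by (rule finite_subset[OF _ tdD(1)]) auto
    have "(\<Sum>z\<in>{z\<in>DE. fst z = x}. case z of (x, K) \<Rightarrow> c x K)
        = (\<Sum>z\<in>{z\<in>DE. fst z = x} \<inter> Q. case z of (x, K) \<Rightarrow> c x K)"
      by (rule sum.mono_neutral_right) (use finDE c0 in \<open>auto simp: Q_def DE_def\<close>)
    also have "\<dots> \<le> (\<Sum>z\<in>Q. case z of (x, K) \<Rightarrow> c x K)"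
      by (rule sum_mono2[OF finQ]) (use cnn in \<open>auto simp: Q_def\<close>)
    also have "\<dots> \<le> of_nat (card Q) * (\<beta> * (1/2) ^ (n x))"
      by (rule sum_bounded_above) (use cb Px in \<open>auto simp: Q_def\<close>)
    also have "\<dots> \<le> 2 * (\<beta> * (1/2) ^ (n x))"
      using tag_count[OF td, of x] unfolding Q_def
      by (intro mult_right_mono) (use beta in auto)
    finally show "(\<Sum>z\<in>{z\<in>DE. fst z = x}. case z of (x, K) \<Rightarrow> c x K) \<le> 2 * \<beta> * (1/2) ^ (n x)"
      by simp
  qed
  also have "\<dots> = 2 * \<beta> * (\<Sum>x\<in>fst ` DE. (1/2) ^ (n x))"
    by (simp add: sum_distrib_left)
  also have "\<dots> \<le> 2 * \<beta> * 2"
  proof (rule mult_left_mono)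
    show "(\<Sum>x\<in>fst ` DE. (1/2::real) ^ (n x)) \<le> 2"
      by (rule geom_sum_le) (use finDE in \<open>auto intro: inj_on_subset[OF inj] simp: DE_def\<close>)
  qed (use beta in auto)
  finally show ?thesis unfolding DE_def by simp
qed

lemma ac_group_bound0:
  fixes D :: "(real \<times> real set) set" and f :: "real \<Rightarrow> 'a::metric_space"
  assumes td: "D tagged_division_of {p..q}" and G: "G \<subseteq> D"
    and Gsub: "\<And>x K. (x, K) \<in> G \<Longrightarrow> K \<subseteq> {c..d} \<and> K \<subseteq> U"
    and Gnd: "\<And>x K. (x, K) \<in> G \<Longrightarrow> Inf K < Sup K"
    and U: "U \<in> lmeasurable" "measure lebesgue U < \<delta>"
    and acp: "\<forall>S. finite S \<and> (\<forall>(u,v)\<in>S. c \<le> u \<and> u \<le> v \<and> v \<le> d) \<and>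
        (\<forall>(u, v) \<in> S. \<forall>(u', v') \<in> S. (u, v) \<noteq> (u', v') \<longrightarrow> v \<le> u' \<or> v' \<le> u) \<and>
        (\<Sum>(u, v) \<in> S. v - u) < \<delta> \<longrightarrow> (\<Sum>(u, v) \<in> S. dist (f v) (f u)) < \<eta>"
  shows "(\<Sum>(x, K)\<in>G. dist (f (Sup K)) (f (Inf K))) < \<eta>"
proof -
  note tdD = tagged_division_ofD[OF td]
  have finG: "finite G" using finite_subset[OF G tdD(1)] .
  define \<phi> where "\<phi> = (\<lambda>(x::real, K::real set). (Inf K, Sup K))"
  define S where "S = \<phi> ` G"
  have el: "\<exists>u v. K = {u..v} \<and> u \<le> x \<and> x \<le> v \<and> Inf K = u \<and> Sup K = v \<and> c \<le> u \<and> v \<le> d"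
    if xKG: "(x, K) \<in> G" for x K
  proof -
    have xKD: "(x, K) \<in> D" using xKG G by blast
    obtain u v where "K = {u..v}" "u \<le> x" "x \<le> v" "Inf K = u" "Sup K = v"
      by (rule tdiv_elem[OF td xKD])
    moreover have "K \<subseteq> {c..d}" using Gsub xKG by blast
    ultimately show ?thesis by auto
  qed
  have inj: "inj_on \<phi> G"
  proof (rule inj_onI, clarify)
    fix x K x' K' assume h: "(x, K) \<in> G" "(x', K') \<in> G" "\<phi> (x, K) = \<phi> (x', K')"
    obtain u v where uv: "K = {u..v}" "u \<le> x" "x \<le> v" "Inf K = u" "Sup K = v" using el[OF h(1)] by blast
    obtain u' v' where uv': "K' = {u'..v'}" "u' \<le> x'" "x' \<le> v'" "Inf K' = u'" "Sup K' = v'"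
      using el[OF h(2)] by blast
    have KK: "K = K'" using h(3) uv uv' by (simp add: \<phi>_def)
    show "x = x' \<and> K = K'"
    proof (rule ccontr)
      assume "\<not> (x = x' \<and> K = K')"
      then have "(x, K) \<noteq> (x', K')" by auto
      then have "interior K \<inter> interior K' = {}" using tdD(5) h(1,2) G by blast
      then have "interior {u..v} = {}" using KK uv by simp
      then have "{u<..<v} = {}" by simp
      then have "\<not> u < v" by (metis greaterThanLessThan_empty_iff2 leD le_less)
      then have "u = v" using uv by linarith
      then show False using uv uv' KK \<open>\<not> (x = x' \<and> K = K')\<close> by auto
    qed
  qed
  have sumeq: "(\<Sum>(u, v)\<in>S. g u v) = (\<Sum>(x, K)\<in>G. g (Inf K) (Sup K))" for g :: "real \<Rightarrow> real \<Rightarrow> real"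
    unfolding S_def by (subst sum.reindex[OF inj]) (auto simp: \<phi>_def intro!: sum.cong)
  have finS: "finite S" unfolding S_def using finG by simp
  have bnd: "\<forall>(u,v)\<in>S. c \<le> u \<and> u \<le> v \<and> v \<le> d"
    unfolding S_def \<phi>_def using el by fastforce
  have novl: "\<forall>(u, v) \<in> S. \<forall>(u', v') \<in> S. (u, v) \<noteq> (u', v') \<longrightarrow> v \<le> u' \<or> v' \<le> u"
  proof (clarsimp simp: S_def \<phi>_def)
    fix x K x' K'
    assume h: "(x, K) \<in> G" "(x', K') \<in> G" "Inf K = Inf K' \<longrightarrow> Sup K \<noteq> Sup K'" "\<not> Sup K' \<le> Inf K"
    obtain u v where uv: "K = {u..v}" "u \<le> x" "x \<le> v" "Inf K = u" "Sup K = v" using el[OF h(1)] by blast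
    obtain u' v' where uv': "K' = {u'..v'}" "u' \<le> x'" "x' \<le> v'" "Inf K' = u'" "Sup K' = v'"
      using el[OF h(2)] by blast
    show "Sup K \<le> Inf K'"
    proof (rule ccontr)
      assume nn: "\<not> Sup K \<le> Inf K'"
      have "(x, K) \<noteq> (x', K')" using h(3) by auto
      then have "interior K \<inter> interior K' = {}" using tdD(5) h(1,2) G by blast
      moreover have "(max u u' + min v v') / 2 \<in> interior K \<inter> interior K'"
        using nn h(4) uv uv' Gnd[OF h(1)] Gnd[OF h(2)] by (auto simp: max_def min_def)
      ultimately show False by blast
    qed
  qed
  have "(\<Sum>(u, v)\<in>S. v - u) = (\<Sum>(x, K)\<in>G. Sup K - Inf K)" by (rule sumeq)
  also have "\<dots> = (\<Sum>(x, K)\<in>G. measure lebesgue (interior K))"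
  proof (rule sum.cong[OF refl], clarify)
    fix x K assume "(x, K) \<in> G"
    then obtain u v where uv: "K = {u..v}" "u \<le> v" "Inf K = u" "Sup K = v" using el by force
    then show "Sup K - Inf K = measure lebesgue (interior K)" by simp
  qed
  also have "\<dots> = measure lebesgue (\<Union>z\<in>G. interior (snd z))"
  proof -
    have pw: "pairwise (\<lambda>z z'. negligible (interior (snd z) \<inter> interior (snd z'))) G"
      unfolding pairwise_def
    proof (intro ballI impI)
      fix z z' assume h: "z \<in> G" "z' \<in> G" "z \<noteq> z'"
      then have "interior (snd z) \<inter> interior (snd z') = {}"
        using tdD(5)[of "fst z" "snd z" "fst z'" "snd z'"] G by auto
      then show "negligible (interior (snd z) \<inter> interior (snd z'))" by simp
    qed
    have "measure lebesgue (\<Union>z\<in>G. interior (snd z)) = (\<Sum>z\<in>G. measure lebesgue (interior (snd z)))"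
      by (rule measure_negligible_finite_Union_image[OF finG _ pw])
         (metis el prod.collapse bounded_closed_interval lmeasurable_interior)
    then show ?thesis by (simp add: split_beta)
  qed
  also have "\<dots> \<le> measure lebesgue U"
  proof (rule measure_mono_fmeasurable[OF _ _ U(1)])
    show "(\<Union>z\<in>G. interior (snd z)) \<subseteq> U" using Gsub interior_subset by fastforce
    show "(\<Union>z\<in>G. interior (snd z)) \<in> sets lebesgue"
      using finG by (intro sets.finite_UN) (auto intro: borel_open)
  qed
  finally have "(\<Sum>(u, v)\<in>S. v - u) < \<delta>" using U(2) by linarith
  with acp finS bnd novl have "(\<Sum>(u, v) \<in> S. dist (f v) (f u)) < \<eta>" by blast
  then show ?thesis using sumeq[of "\<lambda>u v. dist (f v) (f u)"] by simp
qed

lemma ac_group_bound: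
  fixes D :: "(real \<times> real set) set" and f :: "real \<Rightarrow> 'a::metric_space"
  assumes td: "D tagged_division_of {p..q}" and G: "G \<subseteq> D"
    and Gsub: "\<And>x K. (x, K) \<in> G \<Longrightarrow> K \<subseteq> {c..d} \<and> K \<subseteq> U"
    and U: "U \<in> lmeasurable" "measure lebesgue U < \<delta>"
    and acp: "\<forall>S. finite S \<and> (\<forall>(u,v)\<in>S. c \<le> u \<and> u \<le> v \<and> v \<le> d) \<and>
        (\<forall>(u, v) \<in> S. \<forall>(u', v') \<in> S. (u, v) \<noteq> (u', v') \<longrightarrow> v \<le> u' \<or> v' \<le> u) \<and>
        (\<Sum>(u, v) \<in> S. v - u) < \<delta> \<longrightarrow> (\<Sum>(u, v) \<in> S. dist (f v) (f u)) < \<eta>"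
  shows "(\<Sum>(x, K)\<in>G. dist (f (Sup K)) (f (Inf K))) < \<eta>"
proof -
  note tdD = tagged_division_ofD[OF td]
  have finG: "finite G" using finite_subset[OF G tdD(1)] .
  define G' where "G' = {(x, K)\<in>G. Inf K < Sup K}"
  have "(\<Sum>(x, K)\<in>G. dist (f (Sup K)) (f (Inf K))) = (\<Sum>(x, K)\<in>G'. dist (f (Sup K)) (f (Inf K)))"
  proof (rule sum.mono_neutral_right[OF finG])
    show "G' \<subseteq> G" unfolding G'_def by auto
    have z: "Inf K = Sup K" if h: "(x, K) \<in> G" "\<not> Inf K < Sup K" for x K
    proof -
      obtain u v where "K = {u..v}" "u \<le> x" "x \<le> v" "Inf K = u" "Sup K = v"
        using tdiv_elem[OF td, of x K] h G by blast
      then show "Inf K = Sup K" using h by linarith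
    qed
    show "\<forall>i\<in>G - G'. (case i of (x, K) \<Rightarrow> dist (f (Sup K)) (f (Inf K))) = 0"
      using z by (force simp: G'_def)
  qed
  also have "\<dots> < \<eta>"
    by (rule ac_group_bound0[OF td _ _ _ U acp]) (use G Gsub in \<open>fastforce simp: G'_def\<close>)+
  finally show ?thesis .
qed

lemma null_open_cover:
  assumes N: "N \<in> null_sets lebesgue" and d: "\<delta> > 0"
  obtains U where "open U" "N \<subseteq> U" "U \<in> lmeasurable" "measure lebesgue U < \<delta>"
proof -
  obtain T where T: "open T" "N \<subseteq> T" "(T - N) \<in> lmeasurable" "emeasure lebesgue (T - N) < ennreal \<delta>"
    using sets_lebesgue_outer_open[OF null_setsD2[OF N] d] by blast
  have Ts: "T \<in> sets lebesgue" using T(1) by (simp add: borel_open sets_completionI_sets)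
  have "T = (T - N) \<union> N" using T(2) by auto
  then have "emeasure lebesgue T \<le> emeasure lebesgue (T - N) + emeasure lebesgue N"
    by (metis emeasure_subadditive N T(3) fmeasurableD null_setsD2)
  also have "\<dots> = emeasure lebesgue (T - N)" using N by auto
  finally have lt: "emeasure lebesgue T < ennreal \<delta>" using T(4) by order
  have lt2: "emeasure lebesgue T < top" using lt ennreal_less_top[of \<delta>] by (rule order.strict_trans)
  have Tf: "T \<in> lmeasurable" by (rule fmeasurableI[OF Ts]) (use lt2 in \<open>simp only: infinity_ennreal_def\<close>)
  have "measure lebesgue T < \<delta>"
    using lt emeasure_eq_measure2[OF Tf] d by (simp add: ennreal_less_iff)
  then show ?thesis using that T(1,2) Tf by blast
qed

lemma main_ineq:
  fixes f :: "real \<Rightarrow> 'a::metric_space"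
  assumes ab: "a < b" and cont: "continuous_on {a..b} f"
    and Ecl: "closed E" and Ect: "countable E" and Esub: "E \<subseteq> {a..b}"
    and acE: "\<And>c d. c \<le> d \<Longrightarrow> {c..d} \<subseteq> {a..b} - E \<Longrightarrow> abs_cont_on f c d"
    and ae: "AE x in lebesgue. x \<in> {a..b} \<longrightarrow> md_exists f a b x"
    and intg: "md f a b integrable_on {p..q}"
    and pq: "a \<le> p" "p \<le> q" "q \<le> b"
  shows "dist (f q) (f p) \<le> integral {p..q} (md f a b)"
proof -
  define I where "I = integral {p..q} (md f a b)"
  have key: "dist (f q) (f p) \<le> I + e * (11 + (q - p))" if e: "e > 0" for e
  proof -
    obtain N0 where N0: "N0 \<in> null_sets lebesgue"
      and N0x: "\<And>x. x \<in> {a..b} \<Longrightarrow> \<not> md_exists f a b x \<Longrightarrow> x \<in> N0"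
    proof -
      from ae obtain N where N: "{x \<in> space lebesgue. \<not> (x \<in> {a..b} \<longrightarrow> md_exists f a b x)} \<subseteq> N"
        "N \<in> null_sets lebesgue" using ae unfolding eventually_ae_filter by blast
      show ?thesis by (rule that[OF N(2)]) (use N(1) in auto)
    qed
    define \<J> where "\<J> = (\<lambda>(c, d). (max a c, min b d)) ` (\<rat> \<times> \<rat>)"
    have cJ: "countable \<J>" unfolding \<J>_def
      by (intro countable_image countable_SIGMA countable_rat)
    define AC where "AC = (\<lambda>c d \<delta> \<eta>. \<forall>S. finite S \<and> (\<forall>(u,v)\<in>S. c \<le> u \<and> u \<le> v \<and> v \<le> d) \<and>
        (\<forall>(u, v) \<in> S. \<forall>(u', v') \<in> S. (u, v) \<noteq> (u', v') \<longrightarrow> v \<le> u' \<or> v' \<le> u) \<and>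
        (\<Sum>(u, v) \<in> S. v - u) < \<delta> \<longrightarrow> (\<Sum>(u, v) \<in> S. dist (f v) (f u)) < (\<eta>::real))"
    have "\<forall>m. \<exists>\<delta> U. \<delta> > 0 \<and> open U \<and> N0 \<subseteq> U \<and> U \<in> lmeasurable \<and> measure lebesgue U < \<delta> \<and>
         (fst (from_nat_into \<J> m) \<le> snd (from_nat_into \<J> m) \<and>
          {fst (from_nat_into \<J> m)..snd (from_nat_into \<J> m)} \<subseteq> {a..b} - E \<longrightarrow>
          AC (fst (from_nat_into \<J> m)) (snd (from_nat_into \<J> m)) \<delta> (e * (1/2)^m))"
    proof
      fix m
      obtain c d where cd: "from_nat_into \<J> m = (c, d)" by (cases "from_nat_into \<J> m")
      have em: "e * (1/2)^m > 0" using e by simp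
      obtain \<delta> where \<delta>: "\<delta> > 0" "c \<le> d \<and> {c..d} \<subseteq> {a..b} - E \<longrightarrow> AC c d \<delta> (e * (1/2)^m)"
      proof (cases "c \<le> d \<and> {c..d} \<subseteq> {a..b} - E")
        case True
        then have "abs_cont_on f c d" using acE by blast
        then obtain \<delta> where "\<delta> > 0" "AC c d \<delta> (e * (1/2)^m)"
          unfolding abs_cont_on_def AC_def using em by blast
        then show ?thesis using that by blast
      next
        case False
        then show ?thesis using that[of 1] by auto
      qed
      obtain U where U: "open U" "N0 \<subseteq> U" "U \<in> lmeasurable" "measure lebesgue U < \<delta>"
        using null_open_cover[OF N0 \<delta>(1)] by blast
      show "\<exists>\<delta> U. \<delta> > 0 \<and> open U \<and> N0 \<subseteq> U \<and> U \<in> lmeasurable \<and> measure lebesgue U < \<delta> \<and>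
         (fst (from_nat_into \<J> m) \<le> snd (from_nat_into \<J> m) \<and>
          {fst (from_nat_into \<J> m)..snd (from_nat_into \<J> m)} \<subseteq> {a..b} - E \<longrightarrow>
          AC (fst (from_nat_into \<J> m)) (snd (from_nat_into \<J> m)) \<delta> (e * (1/2)^m))"
        apply (rule exI[of _ \<delta>], rule exI[of _ U])
        unfolding cd fst_conv snd_conv using \<delta> U by blast
    qed
    then obtain dl UU where dlU: "\<And>m. dl m > 0 \<and> open (UU m) \<and> N0 \<subseteq> UU m \<and> UU m \<in> lmeasurable \<and>
         measure lebesgue (UU m) < dl m \<and>
         (fst (from_nat_into \<J> m) \<le> snd (from_nat_into \<J> m) \<and>
          {fst (from_nat_into \<J> m)..snd (from_nat_into \<J> m)} \<subseteq> {a..b} - E \<longrightarrow>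
          AC (fst (from_nat_into \<J> m)) (snd (from_nat_into \<J> m)) (dl m) (e * (1/2)^m))"
      by metis
    have "\<forall>x\<in>{a..b} - E. \<exists>J\<in>\<J>. \<exists>r>0. fst J \<le> snd J \<and> {fst J..snd J} \<subseteq> {a..b} - E \<and>
            (\<forall>y\<in>{a..b}. \<bar>y - x\<bar> < r \<longrightarrow> y \<in> {fst J..snd J})"
    proof
      fix x assume x: "x \<in> {a..b} - E"
      have "open (- E)" using Ecl by auto
      then obtain r0 where r0: "r0 > 0" "ball x r0 \<subseteq> - E"
        using x open_contains_ball by blast
      obtain c where c: "c \<in> \<rat>" "x - r0 < c" "c < x - r0/2"
        using Rats_dense_in_real[of "x - r0" "x - r0/2"] r0 by auto
      obtain d where d: "d \<in> \<rat>" "x + r0/2 < d" "d < x + r0"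
        using Rats_dense_in_real[of "x + r0/2" "x + r0"] r0 by auto
      have J: "(max a c, min b d) \<in> \<J>" unfolding \<J>_def using c d by auto
      show "\<exists>J\<in>\<J>. \<exists>r>0. fst J \<le> snd J \<and> {fst J..snd J} \<subseteq> {a..b} - E \<and>
            (\<forall>y\<in>{a..b}. \<bar>y - x\<bar> < r \<longrightarrow> y \<in> {fst J..snd J})"
      proof (intro bexI[OF _ J] exI[of _ "r0/2"] conjI ballI impI)
        show "r0/2 > 0" using r0 by simp
        show "fst (max a c, min b d) \<le> snd (max a c, min b d)" using x c d r0 by auto
        show "{fst (max a c, min b d)..snd (max a c, min b d)} \<subseteq> {a..b} - E"
        proof
          fix y assume y: "y \<in> {fst (max a c, min b d)..snd (max a c, min b d)}"
          then have "y \<in> ball x r0" using c d by (auto simp: dist_real_def)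
          then show "y \<in> {a..b} - E" using y r0 by auto
        qed
        show "y \<in> {fst (max a c, min b d)..snd (max a c, min b d)}"
          if "y \<in> {a..b}" "\<bar>y - x\<bar> < r0/2" for y
          using that c d by (auto simp: abs_real_def split: if_splits)
      qed
    qed
    then obtain Jx rJ where JxrJ: "\<And>x. x \<in> {a..b} - E \<Longrightarrow> Jx x \<in> \<J> \<and> rJ x > 0 \<and> fst (Jx x) \<le> snd (Jx x) \<and>
        {fst (Jx x)..snd (Jx x)} \<subseteq> {a..b} - E \<and>
        (\<forall>y\<in>{a..b}. \<bar>y - x\<bar> < rJ x \<longrightarrow> y \<in> {fst (Jx x)..snd (Jx x)})"
      by metis
    define nE where "nE = to_nat_on E"
    have "\<forall>x\<in>E. \<exists>r>0. \<forall>y\<in>{a..b}. \<bar>y - x\<bar> < r \<longrightarrow> dist (f y) (f x) < e * (1/2)^(nE x)"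
    proof
      fix x assume "x \<in> E"
      then have "x \<in> {a..b}" using Esub by auto
      moreover have "e * (1/2)^(nE x) > 0" using e by simp
      ultimately show "\<exists>r>0. \<forall>y\<in>{a..b}. \<bar>y - x\<bar> < r \<longrightarrow> dist (f y) (f x) < e * (1/2)^(nE x)"
        using cont unfolding continuous_on_iff dist_real_def by blast
    qed
    then obtain rE where rE: "\<And>x. x \<in> E \<Longrightarrow> rE x > 0 \<and>
        (\<forall>y\<in>{a..b}. \<bar>y - x\<bar> < rE x \<longrightarrow> dist (f y) (f x) < e * (1/2)^(nE x))"
      by metis
    have "\<forall>x\<in>{a..b}. \<exists>r>0. md_exists f a b x \<longrightarrow>
        (\<forall>y\<in>{a..b}. \<bar>y - x\<bar> < r \<longrightarrow> dist (f y) (f x) \<le> (md f a b x + e) * \<bar>y - x\<bar>)"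
      using md_bound[OF ab _ _ e] by (metis zero_less_one)
    then obtain rA where rA: "\<And>x. x \<in> {a..b} \<Longrightarrow> rA x > 0 \<and> (md_exists f a b x \<longrightarrow>
        (\<forall>y\<in>{a..b}. \<bar>y - x\<bar> < rA x \<longrightarrow> dist (f y) (f x) \<le> (md f a b x + e) * \<bar>y - x\<bar>))"
      by metis
    define mm where "mm x = to_nat_on \<J> (Jx x)" for x
    have "\<forall>x\<in>{a..b} - E. \<exists>r>0. \<not> md_exists f a b x \<longrightarrow> ball x r \<subseteq> UU (mm x)"
    proof
      fix x assume x: "x \<in> {a..b} - E"
      show "\<exists>r>0. \<not> md_exists f a b x \<longrightarrow> ball x r \<subseteq> UU (mm x)"
      proof (cases "md_exists f a b x")
        case True then show ?thesis by (metis zero_less_one)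
      next
        case False
        then have "x \<in> UU (mm x)" using N0x x dlU by blast
        then show ?thesis using dlU open_contains_ball by blast
      qed
    qed
    then obtain rU where rU: "\<And>x. x \<in> {a..b} - E \<Longrightarrow> rU x > 0 \<and> (\<not> md_exists f a b x \<longrightarrow> ball x (rU x) \<subseteq> UU (mm x))"
      by metis
    have hi: "(md f a b has_integral I) {p..q}" using intg unfolding I_def by (rule integrable_integral)
    have "\<exists>\<gamma>. gauge \<gamma> \<and> (\<forall>D. D tagged_division_of {p..q} \<and> \<gamma> fine D \<longrightarrow>
        norm ((\<Sum>(x,K)\<in>D. measure lborel K *\<^sub>R md f a b x) - I) < e)"
      using has_integral_real[THEN iffD1, OF hi, rule_format, OF e] .
    then obtain \<gamma>0 where g0: "gauge \<gamma>0" and g0D': "\<forall>D. D tagged_division_of {p..q} \<and> \<gamma>0 fine D \<longrightarrow>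
        norm ((\<Sum>(x,K)\<in>D. measure lborel K *\<^sub>R md f a b x) - I) < e"
      by blast
    have g0D: "norm ((\<Sum>(x,K)\<in>D. measure lborel K *\<^sub>R md f a b x) - I) < e"
      if "D tagged_division_of {p..q}" "\<gamma>0 fine D" for D
      using g0D' that by blast
    define R where "R x = (if x \<in> E then rE x else if x \<in> {a..b} \<and> md_exists f a b x then rA x
        else if x \<in> {a..b} then min (rJ x) (rU x) else 1)" for x
    have Rpos: "\<forall>x. R x > 0"
    proof
      fix x
      show "R x > 0"
      proof (cases "x \<in> E")
        case True
        then show ?thesis using rE[OF True] by (simp add: R_def)
      next
        case nE: False
        show ?thesis
        proof (cases "x \<in> {a..b}")
          case True
          have r1: "rA x > 0" using rA[OF True] by blast
          have "x \<in> {a..b} - E" using True nE by blast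
          then have r2: "rJ x > 0" "rU x > 0" using JxrJ rU by blast+
          show ?thesis using r1 r2 nE True by (simp add: R_def)
        next
          case False
          then have "R x = 1" unfolding R_def using nE by auto
          then show ?thesis by simp
        qed
      qed
    qed
    have gR: "gauge (\<lambda>x. ball x (R x))" by (rule gauge_ball_dependent[OF Rpos])
    have "gauge (\<lambda>x. \<gamma>0 x \<inter> ball x (R x))" by (rule gauge_Int[OF g0 gR])
    then obtain D where D: "D tagged_division_of {p..q}" and Dfine: "(\<lambda>x. \<gamma>0 x \<inter> ball x (R x)) fine D"
      by (rule fine_division_exists_real)
    have "\<gamma>0 fine D \<and> (\<lambda>x. ball x (R x)) fine D" using Dfine by (simp only: fine_Int)
    then have fine0: "\<gamma>0 fine D" and fineR: "(\<lambda>x. ball x (R x)) fine D" by auto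
    note tdD = tagged_division_ofD[OF D]
    have Kball: "K \<subseteq> ball x (R x)" if xK: "(x, K) \<in> D" for x K using fineD[OF fineR xK] .
    have Kab: "K \<subseteq> {a..b}" if xK: "(x, K) \<in> D" for x K
    proof -
      have "K \<subseteq> {p..q}" by (rule tdD(3)[OF xK])
      also have "\<dots> \<subseteq> {a..b}" using pq by auto
      finally show ?thesis .
    qed
    have xab: "x \<in> {a..b}" if xK: "(x, K) \<in> D" for x K
      using tdD(2)[OF xK] Kab[OF xK] by blast
    define c where "c x K = dist (f (Sup K)) (f (Inf K))" for x :: real and K :: "real set"
    have cK: "measure lborel K = Sup K - Inf K" if xK: "(x, K) \<in> D" for x K
    proof -
      obtain u v where "K = {u..v}" "u \<le> x" "x \<le> v" "Inf K = u" "Sup K = v" "measure lborel K = v - u"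
        by (rule tdiv_elem[OF D xK])
      then show ?thesis by simp
    qed
    have step1: "dist (f q) (f p) \<le> (\<Sum>(x,K)\<in>D. c x K)"
    proof -
      have "(\<Sum>(x,K)\<in>D. dist (f (Sup K)) (f p) - dist (f (Inf K)) (f p)) = dist (f q) (f p) - dist (f p) (f p)"
        using additive_tagged_division_1[OF pq(2) D, of "\<lambda>t. dist (f t) (f p)"] by simp
      moreover have "(\<Sum>(x,K)\<in>D. dist (f (Sup K)) (f p) - dist (f (Inf K)) (f p)) \<le> (\<Sum>(x,K)\<in>D. c x K)"
      proof (rule sum_mono, clarify)
        fix x K assume "(x, K) \<in> D"
        show "dist (f (Sup K)) (f p) - dist (f (Inf K)) (f p) \<le> c x K"
          using dist_triangle[of "f (Sup K)" "f p" "f (Inf K)"] by (simp add: c_def)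
      qed
      ultimately show ?thesis by simp
    qed
    define DE where "DE = {(x,K)\<in>D. x \<in> E}"
    define DA where "DA = {(x,K)\<in>D. x \<notin> E \<and> md_exists f a b x}"
    define DN where "DN = {(x,K)\<in>D. x \<notin> E \<and> \<not> md_exists f a b x}"
    have finDE: "finite DE" unfolding DE_def by (rule finite_subset[OF _ tdD(1)]) auto
    have finDA: "finite DA" unfolding DA_def by (rule finite_subset[OF _ tdD(1)]) auto
    have finDN: "finite DN" unfolding DN_def by (rule finite_subset[OF _ tdD(1)]) auto
    have split: "(\<Sum>(x,K)\<in>D. c x K) = (\<Sum>(x,K)\<in>DE. c x K) + ((\<Sum>(x,K)\<in>DA. c x K) + (\<Sum>(x,K)\<in>DN. c x K))"
    proof -
      have "D = DE \<union> (DA \<union> DN)" by (auto simp: DE_def DA_def DN_def)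
      moreover have "DE \<inter> (DA \<union> DN) = {}" "DA \<inter> DN = {}" by (auto simp: DE_def DA_def DN_def)
      ultimately show ?thesis
        using finDE finDA finDN by (simp add: sum.union_disjoint)
    qed
    have bE: "(\<Sum>(x,K)\<in>DE. c x K) \<le> 4 * (2 * e)"
      unfolding DE_def
    proof (rule tag_group_bound[OF D, where P="\<lambda>x. x \<in> E" and n=nE and \<beta>="2*e" and c=c])
      show "c x K = 0" if "(x, K) \<in> D" "measure lborel K = 0" for x K
        using cK[OF that(1)] that(2) by (simp add: c_def)
      show "0 \<le> c x K" for x K by (simp add: c_def)
      show "inj_on nE {x. x \<in> E}" unfolding nE_def using inj_on_to_nat_on[OF Ect] by simp
      show "0 \<le> 2 * e" using e by simp
      show "c x K \<le> 2 * e * (1/2) ^ (nE x)" if xK: "(x, K) \<in> D" "x \<in> E" for x K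
      proof -
        obtain u v where uv: "K = {u..v}" "u \<le> x" "x \<le> v" "Inf K = u" "Sup K = v"
          by (rule tdiv_elem[OF D xK(1)])
        have "u \<in> K" "v \<in> K" using uv by auto
        then have uvb: "u \<in> ball x (rE x)" "v \<in> ball x (rE x)" using Kball[OF xK(1)] xK(2) by (auto simp: R_def)
        have uvab: "u \<in> {a..b}" "v \<in> {a..b}" using Kab[OF xK(1)] \<open>u \<in> K\<close> \<open>v \<in> K\<close> by auto
        have "dist (f v) (f x) < e * (1/2)^(nE x)" "dist (f u) (f x) < e * (1/2)^(nE x)"
          using rE[OF xK(2)] uvb uvab by (auto simp: dist_real_def abs_minus_commute)
        moreover have "dist (f v) (f u) \<le> dist (f v) (f x) + dist (f u) (f x)"
          using dist_triangle[of "f v" "f u" "f x"] by (simp add: dist_commute)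
        ultimately show ?thesis using uv by (simp add: c_def)
      qed
    qed
    have bI: "(\<Sum>(x,K)\<in>D. measure lborel K * md f a b x) \<le> I + e"
      using g0D[OF D fine0] by (simp add: abs_less_iff)
    have sumc: "(\<Sum>(x,K)\<in>D. measure lborel K) = q - p"
    proof -
      have "(\<Sum>(x,K)\<in>D. Sup K - Inf K) = q - p"
        using additive_tagged_division_1[OF pq(2) D, of "\<lambda>t. t"] by simp
      then show ?thesis using cK by (metis (mono_tags, lifting) case_prod_conv sum.cong surj_pair)
    qed
    have bA: "(\<Sum>(x,K)\<in>DA. c x K) \<le> (I + e) + e * (q - p)"
    proof -
      have "(\<Sum>(x,K)\<in>DA. c x K) \<le> (\<Sum>(x,K)\<in>DA. measure lborel K * md f a b x + e * measure lborel K)"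
      proof (rule sum_mono, clarify)
        fix x K assume xK: "(x, K) \<in> DA"
        then have xD: "(x, K) \<in> D" and xE: "x \<notin> E" and me: "md_exists f a b x" by (auto simp: DA_def)
        have xab': "x \<in> {a..b}" using xab[OF xD] .
        obtain u v where uv: "K = {u..v}" "u \<le> x" "x \<le> v" "Inf K = u" "Sup K = v" "measure lborel K = v - u"
          by (rule tdiv_elem[OF D xD])
        have "u \<in> K" "v \<in> K" using uv by auto
        then have uvb: "u \<in> ball x (rA x)" "v \<in> ball x (rA x)" using Kball[OF xD] xE me xab' by (auto simp: R_def)
        have uvab: "u \<in> {a..b}" "v \<in> {a..b}" using Kab[OF xD] \<open>u \<in> K\<close> \<open>v \<in> K\<close> by auto
        have rAx: "\<forall>y\<in>{a..b}. \<bar>y - x\<bar> < rA x \<longrightarrow> dist (f y) (f x) \<le> (md f a b x + e) * \<bar>y - x\<bar>"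
          using rA[OF xab'] me by blast
        have "\<bar>v - x\<bar> < rA x" "\<bar>u - x\<bar> < rA x" using uvb by (auto simp: dist_real_def abs_minus_commute)
        then have "dist (f v) (f x) \<le> (md f a b x + e) * \<bar>v - x\<bar>"
          "dist (f u) (f x) \<le> (md f a b x + e) * \<bar>u - x\<bar>"
          using rAx uvab by blast+
        then have "dist (f v) (f x) \<le> (md f a b x + e) * (v - x)"
          "dist (f u) (f x) \<le> (md f a b x + e) * (x - u)"
          using uv by (simp_all add: abs_of_nonneg abs_of_nonpos)
        moreover have "dist (f v) (f u) \<le> dist (f v) (f x) + dist (f u) (f x)"
          using dist_triangle[of "f v" "f u" "f x"] by (simp add: dist_commute)
        ultimately have "dist (f v) (f u) \<le> (md f a b x + e) * (v - u)"
          by (simp add: algebra_simps)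
        then show "c x K \<le> measure lborel K * md f a b x + e * measure lborel K"
          using uv by (simp add: c_def algebra_simps)
      qed
      also have "\<dots> = (\<Sum>(x,K)\<in>DA. measure lborel K * md f a b x) + e * (\<Sum>(x,K)\<in>DA. measure lborel K)"
        by (simp add: sum.distrib sum_distrib_left split_beta)
      also have "\<dots> \<le> (\<Sum>(x,K)\<in>D. measure lborel K * md f a b x) + e * (\<Sum>(x,K)\<in>D. measure lborel K)"
      proof (intro add_mono mult_left_mono)
        show "(\<Sum>(x,K)\<in>DA. measure lborel K * md f a b x) \<le> (\<Sum>(x,K)\<in>D. measure lborel K * md f a b x)"
          by (rule sum_mono2[OF tdD(1)]) (auto simp: DA_def intro!: mult_nonneg_nonneg md_nonneg[OF ab] dest: xab)
        show "(\<Sum>(x,K)\<in>DA. measure lborel K) \<le> (\<Sum>(x,K)\<in>D. measure lborel K)"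
          by (rule sum_mono2[OF tdD(1)]) (auto simp: DA_def)
      qed (use e in auto)
      finally show ?thesis using bI sumc by simp
    qed
    have bN: "(\<Sum>(x,K)\<in>DN. c x K) \<le> e * 2"
    proof -
      have "(\<Sum>(x,K)\<in>DN. c x K) = (\<Sum>m\<in>(\<lambda>z. mm (fst z)) ` DN. \<Sum>z\<in>{z\<in>DN. mm (fst z) = m}. case z of (x,K) \<Rightarrow> c x K)"
        by (rule sum.image_gen[OF finDN])
      also have "\<dots> \<le> (\<Sum>m\<in>(\<lambda>z. mm (fst z)) ` DN. e * (1/2)^m)"
      proof (rule sum_mono)
        fix m assume "m \<in> (\<lambda>z. mm (fst z)) ` DN"
        then obtain x0 K0 where z0: "(x0, K0) \<in> DN" "m = mm x0" by auto
        have x0: "x0 \<in> {a..b} - E" using z0 xab by (auto simp: DN_def)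
        note J0 = JxrJ[OF x0]
        have fm: "from_nat_into \<J> m = Jx x0" using z0 J0 cJ by (simp add: mm_def)
        have "fst (from_nat_into \<J> m) \<le> snd (from_nat_into \<J> m) \<and>
              {fst (from_nat_into \<J> m)..snd (from_nat_into \<J> m)} \<subseteq> {a..b} - E"
          using fm J0 by simp
        then have acp: "AC (fst (from_nat_into \<J> m)) (snd (from_nat_into \<J> m)) (dl m) (e * (1/2)^m)"
          using dlU[of m] by blast
        define G where "G = {z\<in>DN. mm (fst z) = m}"
        have "(\<Sum>(x, K)\<in>G. dist (f (Sup K)) (f (Inf K))) < e * (1/2)^m"
        proof (rule ac_group_bound[OF D])
          show "G \<subseteq> D" by (auto simp: G_def DN_def)
          show "UU m \<in> lmeasurable" "measure lebesgue (UU m) < dl m" using dlU[of m] by auto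
          show "\<forall>S. finite S \<and> (\<forall>(u,v)\<in>S. fst (from_nat_into \<J> m) \<le> u \<and> u \<le> v \<and> v \<le> snd (from_nat_into \<J> m)) \<and>
              (\<forall>(u, v) \<in> S. \<forall>(u', v') \<in> S. (u, v) \<noteq> (u', v') \<longrightarrow> v \<le> u' \<or> v' \<le> u) \<and>
              (\<Sum>(u, v) \<in> S. v - u) < dl m \<longrightarrow> (\<Sum>(u, v) \<in> S. dist (f v) (f u)) < e * (1/2)^m"
            using acp unfolding AC_def .
          fix x K assume xK: "(x, K) \<in> G"
          then have xD: "(x, K) \<in> D" and xE: "x \<notin> E" and me: "\<not> md_exists f a b x" and mx: "mm x = m"
            by (auto simp: G_def DN_def)
          have xab': "x \<in> {a..b}" using xab[OF xD] .
          have x1: "x \<in> {a..b} - E" using xab' xE by auto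
          note Jx1 = JxrJ[OF x1]
          have fmx: "from_nat_into \<J> m = Jx x" using mx Jx1 cJ by (auto simp: mm_def)
          have Rx: "R x = min (rJ x) (rU x)" using xE me xab' by (simp add: R_def)
          show "K \<subseteq> {fst (from_nat_into \<J> m)..snd (from_nat_into \<J> m)} \<and> K \<subseteq> UU m"
          proof
            show "K \<subseteq> {fst (from_nat_into \<J> m)..snd (from_nat_into \<J> m)}"
            proof
              fix y assume "y \<in> K"
              then have "y \<in> {a..b}" "\<bar>y - x\<bar> < rJ x"
                using Kab[OF xD] Kball[OF xD] Rx by (auto simp: dist_real_def abs_minus_commute)
              then show "y \<in> {fst (from_nat_into \<J> m)..snd (from_nat_into \<J> m)}"
                using Jx1 fmx by auto
            qed
            have "K \<subseteq> ball x (rU x)" using Kball[OF xD] Rx by auto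
            also have "\<dots> \<subseteq> UU m" using rU[OF x1] me mx by auto
            finally show "K \<subseteq> UU m" .
          qed
        qed
        then show "(\<Sum>z\<in>{z\<in>DN. mm (fst z) = m}. case z of (x,K) \<Rightarrow> c x K) \<le> e * (1/2)^m"
          unfolding G_def c_def by simp
      qed
      also have "\<dots> = e * (\<Sum>m\<in>(\<lambda>z. mm (fst z)) ` DN. (1/2)^m)" by (simp add: sum_distrib_left)
      also have "\<dots> \<le> e * 2"
        using geom_sum_le[of "(\<lambda>z. mm (fst z)) ` DN" "\<lambda>m. m"] finDN e by simp
      finally show ?thesis .
    qed
    have "dist (f q) (f p) \<le> 4 * (2 * e) + ((I + e) + e * (q - p) + e * 2)"
      using step1 split bE bA bN by linarith
    then show ?thesis by (simp add: algebra_simps)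
  qed
  have C: "11 + (q - p) > 0" using pq by linarith
  show ?thesis unfolding I_def[symmetric]
  proof (rule field_le_epsilon)
    fix \<epsilon> :: real assume eps: "\<epsilon> > 0"
    have "dist (f q) (f p) \<le> I + (\<epsilon> / (11 + (q - p))) * (11 + (q - p))"
      by (rule key) (use C eps in simp)
    then show "dist (f q) (f p) \<le> I + \<epsilon>" using C by simp
  qed
qed

lemma sum_int_le:
  fixes g :: "real \<Rightarrow> real"
  assumes gi: "g integrable_on {a..b}" and gnn: "\<And>x. x \<in> {a..b} \<Longrightarrow> 0 \<le> g x"
    and fin: "finite S" and bnd: "\<forall>(u, v) \<in> S. a \<le> u \<and> u \<le> v \<and> v \<le> b"
    and novl: "\<forall>(u, v) \<in> S. \<forall>(u', v') \<in> S. (u, v) \<noteq> (u', v') \<longrightarrow> v \<le> u' \<or> v' \<le> u"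
  shows "(\<Sum>(u, v)\<in>S. integral {u..v} g) \<le> integral {a..b} g"
proof -
  define \<T> where "\<T> = (\<lambda>(u, v). {u..v}) ` S"
  have inj: "inj_on (\<lambda>(u, v). {u..v}) S"
  proof (rule inj_onI, clarify)
    fix u v u' v' assume h: "(u, v) \<in> S" "(u', v') \<in> S" "{u..v} = {u'..v'}"
    have "u \<le> v" "u' \<le> v'" using h(1,2) bnd by auto
    then show "u = u' \<and> v = v'" using h(3) by (simp add: Icc_eq_Icc)
  qed
  have sub: "\<Union>\<T> \<subseteq> {a..b}" using bnd unfolding \<T>_def by auto
  have hi: "(g has_integral (integral T g)) T" if Tin: "T \<in> \<T>" for T
  proof -
    obtain u v where "T = {u..v}" "(u, v) \<in> S" using Tin unfolding \<T>_def by auto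
    then have "{u..v} \<subseteq> {a..b}" using bnd by auto
    then show ?thesis using \<open>T = {u..v}\<close> integrable_on_subinterval[OF gi] by (simp add: integrable_integral)
  qed
  have pw: "pairwise (\<lambda>T T'. negligible (T \<inter> T')) \<T>"
    unfolding pairwise_def \<T>_def
  proof (clarify)
    fix u v u' v' assume h: "(u, v) \<in> S" "(u', v') \<in> S" "{u..v} \<noteq> {u'..v'}"
    then have "(u, v) \<noteq> (u', v')" by auto
    then have "v \<le> u' \<or> v' \<le> u" using novl h(1,2) by fast
    then have "{u..v} \<inter> {u'..v'} \<subseteq> {u, v}" by auto
    then show "negligible ({u..v} \<inter> {u'..v'})" by (rule negligible_subset[rotated]) auto
  qed
  have finT: "finite \<T>" unfolding \<T>_def using fin by simp
  have U: "(g has_integral (\<Sum>T\<in>\<T>. integral T g)) (\<Union>\<T>)"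
    by (rule has_integral_Union[OF finT hi pw])
  have "(\<Sum>(u, v)\<in>S. integral {u..v} g) = (\<Sum>T\<in>\<T>. integral T g)"
    unfolding \<T>_def by (subst sum.reindex[OF inj]) (auto simp: split_beta)
  also have "\<dots> = integral (\<Union>\<T>) g" using U by (simp add: integral_unique)
  also have "\<dots> \<le> integral {a..b} g"
    by (rule integral_subset_le[OF sub]) (use U gi gnn sub in auto)
  finally show ?thesis .
qed


theorem theorem3p9:
  fixes f :: "real \<Rightarrow> 'a::metric_space" and a b :: real and E :: "real set"
  assumes "continuous_on {a..b} f"
    and "closed E" and "countable E" and "E \<subseteq> {a..b}"
    and "\<And>c d. c \<le> d \<Longrightarrow> {c..d} \<subseteq> {a..b} - E \<Longrightarrow> abs_cont_on f c d"
    and "AE x in lebesgue. x \<in> {a..b} \<longrightarrow> md_exists f a b x"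
    and "(\<integral>\<^sup>+ x \<in> {a..b}. ennreal (md f a b x) \<partial>lebesgue) < \<infinity>"
  shows "abs_cont_on f a b"
proof (cases "a < b")
  case False
  show ?thesis unfolding abs_cont_on_def
  proof (intro allI impI)
    fix \<epsilon> :: real assume eps: "\<epsilon> > 0"
    show "\<exists>\<delta>>0. \<forall>S :: (real \<times> real) set.
        finite S \<and> (\<forall>(u, v) \<in> S. a \<le> u \<and> u \<le> v \<and> v \<le> b) \<and>
        (\<forall>(u, v) \<in> S. \<forall>(u', v') \<in> S. (u, v) \<noteq> (u', v') \<longrightarrow> v \<le> u' \<or> v' \<le> u) \<and>
        (\<Sum>(u, v) \<in> S. v - u) < \<delta>
        \<longrightarrow> (\<Sum>(u, v) \<in> S. dist (f v) (f u)) < \<epsilon>"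
    proof (intro exI[of _ 1] conjI allI impI)
      fix S :: "(real \<times> real) set"
      assume H: "finite S \<and> (\<forall>(u, v) \<in> S. a \<le> u \<and> u \<le> v \<and> v \<le> b) \<and>
        (\<forall>(u, v) \<in> S. \<forall>(u', v') \<in> S. (u, v) \<noteq> (u', v') \<longrightarrow> v \<le> u' \<or> v' \<le> u) \<and>
        (\<Sum>(u, v) \<in> S. v - u) < 1"
      have "\<forall>z\<in>S. (case z of (u, v) \<Rightarrow> dist (f v) (f u)) = 0"
      proof
        fix z assume "z \<in> S"
        obtain u v where z: "z = (u, v)" by (cases z)
        then have "a \<le> u" "u \<le> v" "v \<le> b" using H \<open>z \<in> S\<close> by auto
        then have "u = v" using False by linarith
        then show "(case z of (u, v) \<Rightarrow> dist (f v) (f u)) = 0" using z by simp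
      qed
      then have "(\<Sum>(u, v)\<in>S. dist (f v) (f u)) = 0" by (rule sum.neutral)
      then show "(\<Sum>(u, v)\<in>S. dist (f v) (f u)) < \<epsilon>" using eps by simp
    qed simp
  qed
next
  case True
  note ab = True
  let ?h = "md f a b"
  have si: "set_integrable lebesgue {a..b} ?h"
    by (rule md_integrable[OF ab assms(1) assms(6) assms(7)])
  have hnn: "0 \<le> ?h x" if "x \<in> {a..b}" for x using md_nonneg[OF ab that] .
  have hint: "?h integrable_on {a..b}" using set_lebesgue_integral_eq_integral(1)[OF si] .
  have intsub: "?h integrable_on {u..v}" if "{u..v} \<subseteq> {a..b}" for u v
    by (rule integrable_on_subinterval[OF hint that])
  have minsi: "set_integrable lebesgue {a..b} (\<lambda>x. min (?h x) (real k))" for k :: nat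
  proof -
    have c: "set_integrable lebesgue {a..b} (\<lambda>x. real k)"
      using absolutely_integrable_continuous_real[of a b "\<lambda>x. real k"] by simp
    have "integrable lebesgue (\<lambda>x. min (indicator {a..b} x *\<^sub>R ?h x) (indicator {a..b} x *\<^sub>R real k))"
      using si c unfolding set_integrable_def by (rule integrable_min)
    moreover have "min (indicator {a..b} x *\<^sub>R ?h x) (indicator {a..b} x *\<^sub>R real k)
        = indicator {a..b} x *\<^sub>R min (?h x) (real k)" for x
      by (auto simp: indicator_def)
    ultimately show ?thesis unfolding set_integrable_def by simp
  qed
  have minint: "(\<lambda>x. min (?h x) (real k)) integrable_on {a..b}" for k :: nat
    using set_lebesgue_integral_eq_integral(1)[OF minsi] .
  have dc: "(\<lambda>k. integral {a..b} (\<lambda>x. min (?h x) (real k))) \<longlonglongrightarrow> integral {a..b} ?h"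
  proof (rule dominated_convergence(2)[OF minint hint])
    fix k :: nat and x assume x: "x \<in> {a..b}"
    show "norm (min (?h x) (real k)) \<le> ?h x" using hnn[OF x] by auto
  next
    fix x assume x: "x \<in> {a..b}"
    obtain N :: nat where N: "?h x \<le> real N" using real_arch_simple by blast
    have "\<forall>\<^sub>F k in sequentially. min (?h x) (real k) = ?h x"
      unfolding eventually_sequentially
      by (rule exI[of _ N]) (use N in auto)
    then show "(\<lambda>k. min (?h x) (real k)) \<longlonglongrightarrow> ?h x" by (rule tendsto_eventually)
  qed
  show ?thesis unfolding abs_cont_on_def
  proof (intro allI impI)
    fix \<epsilon> :: real assume eps: "\<epsilon> > 0"
    obtain k where k: "integral {a..b} ?h - integral {a..b} (\<lambda>x. min (?h x) (real k)) < \<epsilon> / 2"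
    proof -
      obtain n0 where "\<forall>n\<ge>n0. norm (integral {a..b} (\<lambda>x. min (?h x) (real n)) - integral {a..b} ?h) < \<epsilon> / 2"
        using LIMSEQ_D[OF dc, of "\<epsilon> / 2"] eps by auto
      then have "norm (integral {a..b} (\<lambda>x. min (?h x) (real n0)) - integral {a..b} ?h) < \<epsilon> / 2" by auto
      then have "\<bar>integral {a..b} (\<lambda>x. min (?h x) (real n0)) - integral {a..b} ?h\<bar> < \<epsilon> / 2" by simp
      then have "integral {a..b} ?h - integral {a..b} (\<lambda>x. min (?h x) (real n0)) < \<epsilon> / 2"
        by linarith
      then show ?thesis by (rule that)
    qed
    define \<delta> where "\<delta> = \<epsilon> / (2 * (real k + 1))"
    have dpos: "\<delta> > 0" unfolding \<delta>_def using eps by simp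
    have kd: "real k * \<delta> < \<epsilon> / 2"
    proof -
      have "real k * \<delta> = (\<epsilon> / 2) * (real k / (real k + 1))" unfolding \<delta>_def by (simp add: field_simps)
      also have "\<dots> < \<epsilon> / 2" using eps by (simp add: field_simps)
      finally show ?thesis .
    qed
    show "\<exists>\<delta>>0. \<forall>S :: (real \<times> real) set.
        finite S \<and> (\<forall>(u, v) \<in> S. a \<le> u \<and> u \<le> v \<and> v \<le> b) \<and>
        (\<forall>(u, v) \<in> S. \<forall>(u', v') \<in> S. (u, v) \<noteq> (u', v') \<longrightarrow> v \<le> u' \<or> v' \<le> u) \<and>
        (\<Sum>(u, v) \<in> S. v - u) < \<delta>
        \<longrightarrow> (\<Sum>(u, v) \<in> S. dist (f v) (f u)) < \<epsilon>"
    proof (intro exI[of _ \<delta>] conjI allI impI dpos)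
      fix S :: "(real \<times> real) set"
      assume H: "finite S \<and> (\<forall>(u, v) \<in> S. a \<le> u \<and> u \<le> v \<and> v \<le> b) \<and>
        (\<forall>(u, v) \<in> S. \<forall>(u', v') \<in> S. (u, v) \<noteq> (u', v') \<longrightarrow> v \<le> u' \<or> v' \<le> u) \<and>
        (\<Sum>(u, v) \<in> S. v - u) < \<delta>"
      then have fin: "finite S" and bnd: "\<forall>(u, v) \<in> S. a \<le> u \<and> u \<le> v \<and> v \<le> b"
        and novl: "\<forall>(u, v) \<in> S. \<forall>(u', v') \<in> S. (u, v) \<noteq> (u', v') \<longrightarrow> v \<le> u' \<or> v' \<le> u"
        and len: "(\<Sum>(u, v) \<in> S. v - u) < \<delta>" by auto
      define r where "r x = ?h x - min (?h x) (real k)" for x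
      have rint: "r integrable_on {a..b}" unfolding r_def by (intro integrable_diff hint minint)
      have rnn: "0 \<le> r x" if "x \<in> {a..b}" for x unfolding r_def by simp
      have "(\<Sum>(u, v)\<in>S. dist (f v) (f u)) \<le> (\<Sum>(u, v)\<in>S. integral {u..v} ?h)"
      proof (rule sum_mono, clarify)
        fix u v assume uv: "(u, v) \<in> S"
        then have "a \<le> u" "u \<le> v" "v \<le> b" using bnd by auto
        then show "dist (f v) (f u) \<le> integral {u..v} ?h"
          by (intro main_ineq[OF ab assms(1,2,3,4,5,6)] intsub) auto
      qed
      also have "\<dots> = (\<Sum>(u, v)\<in>S. integral {u..v} (\<lambda>x. min (?h x) (real k)) + integral {u..v} r)"
      proof (rule sum.cong[OF refl], clarify)
        fix u v assume uv: "(u, v) \<in> S"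
        then have sub: "{u..v} \<subseteq> {a..b}" using bnd by auto
        have "integral {u..v} r = integral {u..v} ?h - integral {u..v} (\<lambda>x. min (?h x) (real k))"
          unfolding r_def
          by (rule integral_diff[OF intsub[OF sub] integrable_on_subinterval[OF minint sub]])
        then show "integral {u..v} ?h = integral {u..v} (\<lambda>x. min (?h x) (real k)) + integral {u..v} r"
          by simp
      qed
      also have "\<dots> = (\<Sum>(u, v)\<in>S. integral {u..v} (\<lambda>x. min (?h x) (real k))) + (\<Sum>(u, v)\<in>S. integral {u..v} r)"
        by (simp add: sum.distrib split_beta)
      also have "\<dots> \<le> (\<Sum>(u, v)\<in>S. real k * (v - u)) + integral {a..b} r"
      proof (rule add_mono)
        show "(\<Sum>(u, v)\<in>S. integral {u..v} (\<lambda>x. min (?h x) (real k))) \<le> (\<Sum>(u, v)\<in>S. real k * (v - u))"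
        proof (rule sum_mono, clarify)
          fix u v assume uv: "(u, v) \<in> S"
          then have sub: "{u..v} \<subseteq> {a..b}" and uv': "u \<le> v" using bnd by auto
          have "integral {u..v} (\<lambda>x. min (?h x) (real k)) \<le> integral {u..v} (\<lambda>x. real k)"
            by (rule integral_le[OF integrable_on_subinterval[OF minint sub]]) auto
          also have "\<dots> = real k * (v - u)" using uv' by simp
          finally show "integral {u..v} (\<lambda>x. min (?h x) (real k)) \<le> real k * (v - u)" .
        qed
        show "(\<Sum>(u, v)\<in>S. integral {u..v} r) \<le> integral {a..b} r"
          by (rule sum_int_le[OF rint rnn fin bnd novl])
      qed
      also have "\<dots> < \<epsilon>"
      proof -
        have "(\<Sum>(u, v)\<in>S. real k * (v - u)) = real k * (\<Sum>(u, v)\<in>S. v - u)"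
          by (simp add: sum_distrib_left split_beta)
        also have "\<dots> \<le> real k * \<delta>" using len by (intro mult_left_mono) auto
        finally have 1: "(\<Sum>(u, v)\<in>S. real k * (v - u)) < \<epsilon> / 2" using kd by linarith
        have "integral {a..b} r = integral {a..b} ?h - integral {a..b} (\<lambda>x. min (?h x) (real k))"
          unfolding r_def by (rule integral_diff[OF hint minint])
        then have 2: "integral {a..b} r < \<epsilon> / 2" using k by simp
        show ?thesis using 1 2 by linarith
      qed
      finally show "(\<Sum>(u, v)\<in>S. dist (f v) (f u)) < \<epsilon>" .
    qed
  qed
qed

end
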